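(* Let $d\ge 1$ and $n\ge d+2$. Suppose ${\bf A}={\bf D}{\bf P}$, with ${\bf D}$ an invertible diagonal $N\times N$ matrix and ${\bf P}$ a permutation matrix, is a linear automorphism of $M_{d,n}$. Then ${\bf A}$ is induced by a vertex relabeling (i.e., ${\bf P}$ maps each $e_{\{i,j\}}$ to $e_{\{\sigma(i),\sigma(j)\}}$ for some permutation $\sigma$ of $\{1,\dots,n\}$) and ${\bf A}$ has uniform scale (i.e., ${\bf D}$ is a scalar multiple of the identity).
   Context: Let $N=\binom{n}{2}$ and index coordinates of $\mathbb C^N$ by the edges $\{i,j\}$ of $K_n$, with coordinate vectors $e_{\{i,j\}}$. For a complex configuration ${\bf p}=({\bf p}_1,\dots,{\bf p}_n)$ in $\mathbb C^d$, $m({\bf p})\in\mathbb C^N$ has coordinates $m_{ij}({\bf p})=\sum_{k=1}^d({\bf p}_i^k-{\bf p}_j^k)^2$ (no conjugation); $M_{d,n}$ is the image of $m$ over all complex configurations. A linear automorphism of $M_{d,n}$ is a non-singular $N\times N$ complex matrix mapping $M_{d,n}$ bijectively onto itself. *)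

theory Defs
  imports Complex_Main "HOL-Combinatorics.Permutations"
begin

definition edges :: "nat \<Rightarrow> nat set set" where
  "edges n = {{i, j} | i j. i < j \<and> j < n}"

(* Vectors of C^N: functions on edges (values off the edge set are forced to 0). *)
definition vecs :: "nat \<Rightarrow> (nat set \<Rightarrow> complex) set" where
  "vecs n = {x. \<forall>e. e \<notin> edges n \<longrightarrow> x e = 0}"

(* Complex configuration p: p i k is the k-th coordinate of point i (i < n, k < d). *)
definition mvec :: "nat \<Rightarrow> nat \<Rightarrow> (nat \<Rightarrow> nat \<Rightarrow> complex) \<Rightarrow> nat set \<Rightarrow> complex" where
  "mvec d n p e = (if e \<in> edges n then (\<Sum>k<d. (p (Min e) k - p (Max e) k)^2) else 0)"

definition Mdn :: "nat \<Rightarrow> nat \<Rightarrow> (nat set \<Rightarrow> complex) set" where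
  "Mdn d n = range (mvec d n)"

definition matvec :: "nat \<Rightarrow> (nat set \<Rightarrow> nat set \<Rightarrow> complex) \<Rightarrow> (nat set \<Rightarrow> complex) \<Rightarrow> nat set \<Rightarrow> complex" where
  "matvec n A x = (\<lambda>e. if e \<in> edges n then (\<Sum>f\<in>edges n. A e f * x f) else 0)"

definition matmul :: "nat \<Rightarrow> (nat set \<Rightarrow> nat set \<Rightarrow> complex) \<Rightarrow> (nat set \<Rightarrow> nat set \<Rightarrow> complex) \<Rightarrow> nat set \<Rightarrow> nat set \<Rightarrow> complex" where
  "matmul n A B = (\<lambda>e g. \<Sum>f\<in>edges n. A e f * B f g)"

definition diag_mat :: "(nat set \<Rightarrow> complex) \<Rightarrow> nat set \<Rightarrow> nat set \<Rightarrow> complex" where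
  "diag_mat D = (\<lambda>e f. if e = f then D e else 0)"

(* permutation matrix sending basis vector e_f to e_(\<pi> f) *)
definition perm_mat :: "(nat set \<Rightarrow> nat set) \<Rightarrow> nat set \<Rightarrow> nat set \<Rightarrow> complex" where
  "perm_mat \<pi> = (\<lambda>e f. if e = \<pi> f then 1 else 0)"

definition nonsingular :: "nat \<Rightarrow> (nat set \<Rightarrow> nat set \<Rightarrow> complex) \<Rightarrow> bool" where
  "nonsingular n A \<longleftrightarrow> inj_on (matvec n A) (vecs n)"

definition lin_aut :: "nat \<Rightarrow> nat \<Rightarrow> (nat set \<Rightarrow> nat set \<Rightarrow> complex) \<Rightarrow> bool" where
  "lin_aut d n A \<longleftrightarrow> nonsingular n A \<and> bij_betw (matvec n A) (Mdn d n) (Mdn d n)"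

end

theory Submission
  imports Defs
begin

lemma dep_lemma:
  fixes V :: "nat \<Rightarrow> nat \<Rightarrow> complex"
  assumes "finite I" "card I > k"
  shows "\<exists>\<xi>. (\<exists>a\<in>I. \<xi> a \<noteq> 0) \<and> (\<forall>c<k. (\<Sum>a\<in>I. \<xi> a * V a c) = 0)"
  using assms
proof (induction k arbitrary: I V)
  case 0
  then obtain a where "a \<in> I" by fastforce
  then show ?case by (intro exI[of _ "\<lambda>_. 1"]) auto
next
  case (Suc k)
  show ?case
  proof (cases "\<forall>a\<in>I. V a k = 0")
    case True
    from Suc.IH[of I V] Suc.prems obtain \<xi> where h: "\<exists>a\<in>I. \<xi> a \<noteq> 0" "\<forall>c<k. (\<Sum>a\<in>I. \<xi> a * V a c) = 0"
      by auto
    show ?thesis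
    proof (intro exI[of _ \<xi>] conjI allI impI)
      fix c assume "c < Suc k"
      then show "(\<Sum>a\<in>I. \<xi> a * V a c) = 0"
        using h True by (cases "c = k") auto
    qed (use h in auto)
  next
    case False
    then obtain a0 where a0: "a0 \<in> I" "V a0 k \<noteq> 0" by auto
    define V' where "V' = (\<lambda>a c. V a c - (V a k / V a0 k) * V a0 c)"
    define I' where "I' = I - {a0}"
    have fI': "finite I'" and cI': "card I' > k" using Suc.prems a0 by (auto simp: I'_def)
    from Suc.IH[OF fI' cI', of V'] obtain \<xi>' where
      h: "\<exists>a\<in>I'. \<xi>' a \<noteq> 0" "\<forall>c<k. (\<Sum>a\<in>I'. \<xi>' a * V' a c) = 0" by auto
    define g where "g = - (\<Sum>a\<in>I'. \<xi>' a * V a k) / V a0 k"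
    define \<xi> where "\<xi> = (\<lambda>a. if a = a0 then g else \<xi>' a)"
    have split: "(\<Sum>a\<in>I. \<xi> a * V a c) = g * V a0 c + (\<Sum>a\<in>I'. \<xi>' a * V a c)" for c
    proof -
      have "(\<Sum>a\<in>I. \<xi> a * V a c) = \<xi> a0 * V a0 c + (\<Sum>a\<in>I'. \<xi> a * V a c)"
        using Suc.prems a0 by (simp add: I'_def sum.remove)
      also have "(\<Sum>a\<in>I'. \<xi> a * V a c) = (\<Sum>a\<in>I'. \<xi>' a * V a c)"
        by (rule sum.cong) (auto simp: \<xi>_def I'_def)
      finally show ?thesis by (simp add: \<xi>_def)
    qed
    show ?thesis
    proof (intro exI[of _ \<xi>] conjI allI impI)
      show "\<exists>a\<in>I. \<xi> a \<noteq> 0" using h(1) by (auto simp: \<xi>_def I'_def)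
    next
      fix c assume c: "c < Suc k"
      show "(\<Sum>a\<in>I. \<xi> a * V a c) = 0"
      proof (cases "c = k")
        case True
        then show ?thesis using a0 by (simp add: split g_def)
      next
        case False
        then have "c < k" using c by auto
        then have "(\<Sum>a\<in>I'. \<xi>' a * V' a c) = 0" using h by auto
        then have "(\<Sum>a\<in>I'. \<xi>' a * V a c) - (\<Sum>a\<in>I'. \<xi>' a * V a k) / V a0 k * V a0 c = 0"
          by (simp add: V'_def algebra_simps sum_subtractf sum_distrib_left sum_distrib_right sum_divide_distrib)
        then show ?thesis using a0 by (simp add: split g_def field_simps)
      qed
    qed
  qed
qed


lemma span_or_annih:
  fixes V :: "nat \<Rightarrow> nat \<Rightarrow> complex"
  assumes "finite I"
  shows "(\<forall>x. \<exists>\<xi>. \<forall>c<k. (\<Sum>a\<in>I. \<xi> a * V a c) = x c) \<or>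
         (\<exists>w. (\<exists>c<k. w c \<noteq> 0) \<and> (\<forall>a\<in>I. (\<Sum>c<k. w c * V a c) = 0))"
  using assms
proof (induction k arbitrary: V)
  case 0
  show ?case by (rule disjI1) simp
next
  case (Suc k)
  show ?case
  proof (cases "\<forall>a\<in>I. V a k = 0")
    case True
    show ?thesis
    proof (rule disjI2, rule exI[of _ "\<lambda>c. if c = k then 1 else 0"], intro conjI ballI)
      fix a assume "a \<in> I"
      then have "V a k = 0" using True by blast
      then show "(\<Sum>c<Suc k. (if c = k then 1 else 0) * V a c) = 0" by simp
    next
      show "\<exists>c<Suc k. (if c = k then 1 else (0::complex)) \<noteq> 0" by auto
    qed
  next
    case False
    then obtain a0 where a0: "a0 \<in> I" "V a0 k \<noteq> 0" by auto
    define V' where "V' = (\<lambda>a c. V a c - (V a k / V a0 k) * V a0 c)"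
    from Suc.IH[OF Suc.prems, of V'] show ?thesis
    proof
      assume H: "\<forall>x. \<exists>\<xi>. \<forall>c<k. (\<Sum>a\<in>I. \<xi> a * V' a c) = x c"
      show ?thesis
      proof (rule disjI1, intro allI)
        fix x :: "nat \<Rightarrow> complex"
        obtain \<xi>' where h: "\<forall>c<k. (\<Sum>a\<in>I. \<xi>' a * V' a c) = x c - (x k / V a0 k) * V a0 c"
          using spec[OF H, of "\<lambda>c. x c - (x k / V a0 k) * V a0 c"] by (elim exE) simp
        define g where "g = (x k - (\<Sum>a\<in>I. \<xi>' a * V a k)) / V a0 k"
        define \<xi> where "\<xi> = (\<lambda>a. if a = a0 then \<xi>' a + g else \<xi>' a)"
        have e: "(\<Sum>a\<in>I. \<xi> a * V a c) = g * V a0 c + (\<Sum>a\<in>I. \<xi>' a * V a c)" for c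
        proof -
          have "(\<Sum>a\<in>I. \<xi> a * V a c) = (\<Sum>a\<in>I. \<xi>' a * V a c + (if a = a0 then g * V a0 c else 0))"
            by (rule sum.cong) (auto simp: \<xi>_def distrib_right)
          also have "\<dots> = (\<Sum>a\<in>I. \<xi>' a * V a c) + g * V a0 c"
            using a0 Suc.prems by (simp add: sum.distrib)
          finally show ?thesis by simp
        qed
        show "\<exists>\<xi>. \<forall>c<Suc k. (\<Sum>a\<in>I. \<xi> a * V a c) = x c"
        proof (intro exI[of _ \<xi>] allI impI)
          fix c assume c: "c < Suc k"
          show "(\<Sum>a\<in>I. \<xi> a * V a c) = x c"
          proof (cases "c = k")
            case True
            then show ?thesis using a0(2) unfolding e g_def by simp
          next
            case False
            then have "c < k" using c by auto
            then have h1: "(\<Sum>a\<in>I. \<xi>' a * V' a c) = x c - (x k / V a0 k) * V a0 c" using h by auto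
            have t2: "(\<Sum>a\<in>I. \<xi>' a * V' a c) = (\<Sum>a\<in>I. \<xi>' a * V a c) - (\<Sum>a\<in>I. \<xi>' a * V a k) / V a0 k * V a0 c"
              unfolding V'_def by (simp add: right_diff_distrib sum_subtractf sum_distrib_right sum_divide_distrib mult.assoc)
            have gg: "g * V a0 c = (x k / V a0 k) * V a0 c - (\<Sum>a\<in>I. \<xi>' a * V a k) / V a0 k * V a0 c"
              unfolding g_def by (simp add: diff_divide_distrib left_diff_distrib)
            have "(\<Sum>a\<in>I. \<xi>' a * V a c) = x c - (x k / V a0 k) * V a0 c + (\<Sum>a\<in>I. \<xi>' a * V a k) / V a0 k * V a0 c"
              using h1 t2 by (simp add: algebra_simps eq_diff_eq)
            then show ?thesis unfolding e gg by simp
          qed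
        qed
      qed
    next
      assume H: "\<exists>w. (\<exists>c<k. w c \<noteq> 0) \<and> (\<forall>a\<in>I. (\<Sum>c<k. w c * V' a c) = 0)"
      then obtain w' where w': "\<exists>c<k. w' c \<noteq> 0" "\<forall>a\<in>I. (\<Sum>c<k. w' c * V' a c) = 0" by blast
      define w where "w = (\<lambda>c. if c = k then - (\<Sum>c<k. w' c * V a0 c) / V a0 k else w' c)"
      show ?thesis
      proof (rule disjI2, intro exI[of _ w] conjI ballI)
        show "\<exists>c<Suc k. w c \<noteq> 0" using w'(1) by (auto simp: w_def)
      next
        fix a assume a: "a \<in> I"
        have t1: "(\<Sum>c<k. w' c * V' a c) = (\<Sum>c<k. w' c * V a c) - (V a k / V a0 k) * (\<Sum>c<k. w' c * V a0 c)"
          unfolding V'_def by (simp add: right_diff_distrib sum_subtractf sum_distrib_left mult.left_commute)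
        have 1: "(\<Sum>c<k. w' c * V a c) = (V a k / V a0 k) * (\<Sum>c<k. w' c * V a0 c)"
          using w' a t1 by simp
        have "(\<Sum>c<Suc k. w c * V a c) = (\<Sum>c<k. w' c * V a c) + w k * V a k"
          by (simp add: w_def)
        also have "\<dots> = 0" unfolding 1 w_def using a0(2) by simp
        finally show "(\<Sum>c<Suc k. w c * V a c) = 0" .
      qed
    qed
  qed
qed

definition dotk :: "nat \<Rightarrow> (nat \<Rightarrow> complex) \<Rightarrow> (nat \<Rightarrow> complex) \<Rightarrow> complex" where
  "dotk k u v = (\<Sum>c<k. u c * v c)"

definition sqd :: "nat \<Rightarrow> (nat \<Rightarrow> nat \<Rightarrow> complex) \<Rightarrow> nat \<Rightarrow> nat \<Rightarrow> complex" where
  "sqd k p i j = (\<Sum>c<k. (p i c - p j c)^2)"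

lemma edges_iff: "{i, j} \<in> edges n \<longleftrightarrow> i \<noteq> j \<and> i < n \<and> j < n"
proof
  assume "{i, j} \<in> edges n"
  then obtain a b where ab: "{i,j} = {a,b}" "a < b" "b < n" by (auto simp: edges_def)
  then show "i \<noteq> j \<and> i < n \<and> j < n" by (auto simp: doubleton_eq_iff)
next
  assume h: "i \<noteq> j \<and> i < n \<and> j < n"
  show "{i, j} \<in> edges n"
  proof (cases "i < j")
    case True then show ?thesis using h by (auto simp: edges_def)
  next
    case False then have "{i,j} = {j,i}" "j < i" using h by auto
    then show ?thesis using h unfolding edges_def by blast
  qed
qed

lemma mvec_pair:
  assumes "i < n" "j < n" "i \<noteq> j"
  shows "mvec k n p {i, j} = sqd k p i j"
proof -
  have e: "{i,j} \<in> edges n" using assms by (simp add: edges_iff)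
  show ?thesis
  proof (cases "i < j")
    case True
    then have "Min {i,j} = i" "Max {i,j} = j" by auto
    then show ?thesis using e by (simp add: mvec_def sqd_def)
  next
    case False
    then have "Min {i,j} = j" "Max {i,j} = i" using assms by auto
    then show ?thesis using e by (simp add: mvec_def sqd_def power2_commute)
  qed
qed

lemma edge_cases: "e \<in> edges n \<Longrightarrow> \<exists>i j. e = {i,j} \<and> i < j \<and> j < n"
  by (auto simp: edges_def)

lemma mvec_eqI:
  assumes "\<And>i j. i < n \<Longrightarrow> j < n \<Longrightarrow> i \<noteq> j \<Longrightarrow> sqd k p i j = sqd k' q i j"
  shows "mvec k n p = mvec k' n q"
proof
  fix e
  show "mvec k n p e = mvec k' n q e"
  proof (cases "e \<in> edges n")
    case True
    then obtain i j where "e = {i,j}" "i < j" "j < n" using edge_cases by blast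
    then show ?thesis using assms[of i j] by (simp add: mvec_pair)
  next
    case False
    then show ?thesis by (simp add: mvec_def)
  qed
qed

lemma dotk_expand:
  "dotk k (\<lambda>c. x c - a * h c) (\<lambda>c. y c - b * h c)
   = dotk k x y - b * dotk k x h - a * dotk k h y + a * b * dotk k h h"
  unfolding dotk_def
  by (simp add: algebra_simps sum_subtractf sum.distrib sum_distrib_left)

lemma aux_cancel:
  fixes a b N c :: complex
  assumes "N \<noteq> 0"
  shows "c - (2 * b / N) * a - (2 * a / N) * b + (2 * a / N) * (2 * b / N) * N = c"
  using assms by (simp add: field_simps)

lemma aux_lin:
  fixes X Y hx hy N hc :: complex
  assumes "D = hx - hy"
  shows "X - Y - (2 * D / N) * hc = (X - (2 * hx / N) * hc) - (Y - (2 * hy / N) * hc)"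
  using assms by (simp add: diff_divide_distrib left_diff_distrib right_diff_distrib)

lemma householder_reduce:
  assumes k: "k \<ge> 1" and uu: "dotk k u u \<noteq> 0"
    and orth: "\<And>i. i < n \<Longrightarrow> dotk k (\<lambda>c. p i c - p 0 c) u = 0"
  shows "mvec k n p \<in> Mdn (k - 1) n"
proof -
  define K where "K = k - 1"
  have kK: "k = Suc K" using k by (simp add: K_def)
  define \<alpha> where "\<alpha> = csqrt (dotk k u u)"
  have a2: "\<alpha> * \<alpha> = dotk k u u" by (simp add: \<alpha>_def power2_eq_square[symmetric])
  have a0: "\<alpha> \<noteq> 0" using uu a2 by auto
  define s :: complex where "s = (if \<alpha> \<noteq> u K then 1 else -1)"
  have s2: "s * s = 1" by (simp add: s_def)
  have sne: "\<alpha> - s * u K \<noteq> 0"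
    using a0 by (auto simp: s_def)
  define h where "h = (\<lambda>c. u c - s * \<alpha> * (if c = K then 1 else 0))"
  have dhu: "dotk k h u = \<alpha> * \<alpha> - s * \<alpha> * u K"
  proof -
    have "dotk k h u = (\<Sum>c<k. u c * u c - (if c = K then s * \<alpha> * u K else 0))"
      unfolding dotk_def h_def by (rule sum.cong) (auto simp: algebra_simps)
    also have "\<dots> = dotk k u u - s * \<alpha> * u K"
      by (simp add: sum_subtractf dotk_def kK)
    finally show ?thesis using a2 by simp
  qed
  have dhh: "dotk k h h = 2 * (\<alpha> * \<alpha> - s * \<alpha> * u K)"
  proof -
    have "dotk k h h = (\<Sum>c<k. u c * u c - (if c = K then 2 * s * \<alpha> * u K - s * s * \<alpha> * \<alpha> else 0))"
      unfolding dotk_def h_def by (rule sum.cong) (auto simp: algebra_simps power2_eq_square)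
    also have "\<dots> = dotk k u u - (2 * s * \<alpha> * u K - s * s * \<alpha> * \<alpha>)"
      by (simp add: sum_subtractf dotk_def kK)
    finally show ?thesis using a2 s2 by (simp add: algebra_simps)
  qed
  define N where "N = dotk k h h"
  have "\<alpha> * \<alpha> - s * \<alpha> * u K = \<alpha> * (\<alpha> - s * u K)" by (simp add: algebra_simps)
  then have N0: "N \<noteq> 0" using dhh sne a0 unfolding N_def by simp
  define H where "H = (\<lambda>x c. x c - (2 * dotk k h x / N) * h c)"
  have dotH: "dotk k (H x) (H y) = dotk k x y" for x y
  proof -
    have "dotk k (H x) (H y) = dotk k x y - (2 * dotk k h y / N) * dotk k x h
        - (2 * dotk k h x / N) * dotk k h y + (2 * dotk k h x / N) * (2 * dotk k h y / N) * dotk k h h"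
      unfolding H_def by (rule dotk_expand)
    also have "dotk k x h = dotk k h x" by (simp add: dotk_def mult.commute)
    finally show ?thesis using aux_cancel[OF N0] unfolding N_def by simp
  qed
  have Hu: "H u c = s * \<alpha> * (if c = K then 1 else 0)" for c
  proof -
    have "2 * dotk k h u / N = 1" using dhu dhh N0 unfolding N_def by simp
    then show ?thesis by (simp add: H_def h_def)
  qed
  have Hlin: "H (\<lambda>c. x c - y c) c = H x c - H y c" for x y c
  proof -
    have "dotk k h (\<lambda>c. x c - y c) = dotk k h x - dotk k h y"
      by (simp add: dotk_def algebra_simps sum_subtractf)
    then show ?thesis unfolding H_def by (rule aux_lin)
  qed
  define q where "q = (\<lambda>i c. H (p i) c)"
  have "sqd k p i j = sqd K q i j" if ij: "i < n" "j < n" for i j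
  proof -
    define X where "X = (\<lambda>c. p i c - p j c)"
    have Xu: "dotk k X u = 0"
    proof -
      have "dotk k X u = dotk k (\<lambda>c. p i c - p 0 c) u - dotk k (\<lambda>c. p j c - p 0 c) u"
        by (simp add: X_def dotk_def algebra_simps sum_subtractf)
      then show ?thesis using orth ij by simp
    qed
    have "dotk k (H X) (H u) = 0" using dotH Xu by simp
    moreover have "dotk k (H X) (H u) = H X K * (s * \<alpha>)"
    proof -
      have "dotk k (H X) (H u) = (\<Sum>c<k. if c = K then H X K * (s * \<alpha>) else 0)"
        unfolding dotk_def Hu by (rule sum.cong) auto
      also have "\<dots> = H X K * (s * \<alpha>)" by (simp add: kK)
      finally show ?thesis .
    qed
    ultimately have HXK: "H X K = 0" using a0 s2 by auto
    have "sqd k p i j = dotk k X X" by (simp add: sqd_def dotk_def X_def power2_eq_square)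
    also have "\<dots> = dotk k (H X) (H X)" using dotH by simp
    also have "\<dots> = (\<Sum>c<K. H X c * H X c)" by (simp add: dotk_def kK HXK)
    also have "\<dots> = sqd K q i j"
      unfolding sqd_def q_def X_def Hlin by (simp add: power2_eq_square)
    finally show ?thesis .
  qed
  then have "mvec k n p = mvec K n q" by (intro mvec_eqI) auto
  then show ?thesis by (simp add: Mdn_def K_def)
qed

lemma dotk_comm: "dotk k x y = dotk k y x"
  by (simp add: dotk_def mult.commute)
lemma dotk_diff_left: "dotk k (\<lambda>c. x c - y c) z = dotk k x z - dotk k y z"
  by (simp add: dotk_def left_diff_distrib sum_subtractf)
lemma dotk_add_left: "dotk k (\<lambda>c. x c + y c) z = dotk k x z + dotk k y z"
  by (simp add: dotk_def distrib_right sum.distrib)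
lemma dotk_scale_left: "dotk k (\<lambda>c. a * x c) z = a * dotk k x z"
  by (simp add: dotk_def sum_distrib_left mult.assoc)
lemma dotk_diff_right: "dotk k z (\<lambda>c. x c - y c) = dotk k z x - dotk k z y"
  by (simp add: dotk_def right_diff_distrib sum_subtractf)
lemma dotk_add_right: "dotk k z (\<lambda>c. x c + y c) = dotk k z x + dotk k z y"
  by (simp add: dotk_def distrib_left sum.distrib)
lemma dotk_scale_right: "dotk k z (\<lambda>c. a * x c) = a * dotk k z x"
  by (simp add: dotk_def sum_distrib_left mult.left_commute)
lemma sqd_dotk: "sqd k p i j = dotk k (\<lambda>c. p i c - p j c) (\<lambda>c. p i c - p j c)"
  by (simp add: sqd_def dotk_def power2_eq_square)

lemma reduce_dim:
  assumes k: "k \<ge> 1" and wnz: "\<exists>c<k. w c \<noteq> 0"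
    and orth: "\<And>i. i < n \<Longrightarrow> dotk k (\<lambda>c. p i c - p 0 c) w = 0"
  shows "mvec k n p \<in> Mdn (k - 1) n"
proof (cases "dotk k w w = 0")
  case False
  show ?thesis by (rule householder_reduce[OF k False]) (rule orth)
next
  case True
  from wnz obtain c0 where c0: "c0 < k" "w c0 \<noteq> 0" by blast
  define w' where "w' = (\<lambda>c. if c = c0 then 1 / w c0 else 0)"
  have ww': "dotk k w w' = 1"
  proof -
    have "dotk k w w' = (\<Sum>c<k. if c = c0 then 1 else 0)"
      unfolding dotk_def w'_def by (rule sum.cong) (auto simp: c0)
    also have "\<dots> = 1" using c0 by simp
    finally show ?thesis .
  qed
  define g where "g = (\<lambda>i. dotk k (\<lambda>c. p i c - p 0 c) w')"
  define p' where "p' = (\<lambda>i c. p i c - g i * w c)"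
  have g0: "g 0 = 0" by (simp add: g_def dotk_def)
  have p'0: "p' 0 = p 0" by (simp add: p'_def g0)
  have same: "mvec k n p' = mvec k n p"
  proof (rule mvec_eqI)
    fix i j assume ij: "i < n" "j < n" "i \<noteq> j"
    define X where "X = (\<lambda>c. p i c - p j c)"
    have Xw: "dotk k X w = 0"
    proof -
      have "X = (\<lambda>c. (p i c - p 0 c) - (p j c - p 0 c))" by (simp add: X_def)
      then have "dotk k X w = dotk k (\<lambda>c. p i c - p 0 c) w - dotk k (\<lambda>c. p j c - p 0 c) w"
        by (simp add: dotk_diff_left)
      then show ?thesis using orth ij by simp
    qed
    have "(\<lambda>c. p' i c - p' j c) = (\<lambda>c. X c - (g i - g j) * w c)"
      by (auto simp: p'_def X_def algebra_simps)
    then have "sqd k p' i j = dotk k (\<lambda>c. X c - (g i - g j) * w c) (\<lambda>c. X c - (g i - g j) * w c)"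
      by (simp add: sqd_dotk)
    also have "\<dots> = dotk k X X" using Xw True by (simp add: dotk_expand dotk_comm[of k w X])
    also have "\<dots> = sqd k p i j" by (simp add: sqd_dotk X_def)
    finally show "sqd k p' i j = sqd k p i j" .
  qed
  define q where "q = dotk k w' w'"
  define r where "r = (1 - q) / 2"
  define u where "u = (\<lambda>c. r * w c + w' c)"
  have uu: "dotk k u u = 1"
  proof -
    have "dotk k u u = r * (r * dotk k w w + dotk k w w')
        + (r * dotk k w' w + dotk k w' w')"
      unfolding u_def by (simp add: dotk_add_left dotk_add_right dotk_scale_left dotk_scale_right distrib_left)
    also have "\<dots> = 1" using True ww' by (simp add: dotk_comm[of k w' w] q_def r_def field_simps)
    finally show ?thesis .
  qed
  have orth': "dotk k (\<lambda>c. p' i c - p' 0 c) u = 0" if i: "i < n" for i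
  proof -
    have e: "(\<lambda>c. p' i c - p' 0 c) = (\<lambda>c. (p i c - p 0 c) - g i * w c)"
      by (auto simp: p'_def g0)
    have 1: "dotk k (\<lambda>c. p' i c - p' 0 c) w = 0"
      unfolding e using orth[OF i] True by (simp add: dotk_diff_left dotk_scale_left)
    have 2: "dotk k (\<lambda>c. p' i c - p' 0 c) w' = 0"
      unfolding e using ww' by (simp add: dotk_diff_left dotk_scale_left g_def)
    show ?thesis unfolding u_def using 1 2 by (simp add: dotk_add_right dotk_scale_right)
  qed
  have "mvec k n p' \<in> Mdn (k - 1) n"
    by (rule householder_reduce[OF k]) (use uu orth' in auto)
  then show ?thesis using same by simp
qed

definition yy :: "(nat set \<Rightarrow> complex) \<Rightarrow> nat \<Rightarrow> nat \<Rightarrow> complex" where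
  "yy y i j = (if i = j then 0 else y {i, j})"

definition bet :: "nat \<Rightarrow> (nat set \<Rightarrow> complex) \<Rightarrow> (nat \<Rightarrow> complex) \<Rightarrow> (nat \<Rightarrow> complex) \<Rightarrow> complex" where
  "bet n y l m = (\<Sum>i<n. \<Sum>j<n. l i * m j * yy y i j)"

definition Lp :: "nat \<Rightarrow> (nat \<Rightarrow> nat \<Rightarrow> complex) \<Rightarrow> (nat \<Rightarrow> complex) \<Rightarrow> nat \<Rightarrow> complex" where
  "Lp n p l c = (\<Sum>i<n. l i * p i c)"

definition Lam :: "nat \<Rightarrow> (nat \<Rightarrow> complex) \<Rightarrow> bool" where
  "Lam n l \<longleftrightarrow> (\<Sum>i<n. l i) = 0"

lemma yy_sym: "yy y i j = yy y j i"
  by (simp add: yy_def insert_commute)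

lemma bet_sym: "bet n y l m = bet n y m l"
  unfolding bet_def by (subst sum.swap) (simp add: yy_sym mult.commute mult.left_commute)

lemma one_coord:
  fixes a l m :: "nat \<Rightarrow> complex"
  assumes "(\<Sum>i<n. l i) = 0" "(\<Sum>j<n. m j) = 0"
  shows "(\<Sum>i<n. \<Sum>j<n. l i * m j * (a i - a j)^2) = -2 * ((\<Sum>i<n. l i * a i) * (\<Sum>j<n. m j * a j))"
proof -
  have e: "l i * m j * (a i - a j)^2 = (l i * a i^2) * m j - 2 * ((l i * a i) * (m j * a j)) + l i * (m j * a j^2)" for i j
    by (simp add: power2_eq_square algebra_simps)
  have "(\<Sum>i<n. \<Sum>j<n. l i * m j * (a i - a j)^2)
      = (\<Sum>i<n. (l i * a i^2) * (\<Sum>j<n. m j) - 2 * ((l i * a i) * (\<Sum>j<n. m j * a j)) + l i * (\<Sum>j<n. m j * a j^2))"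
    unfolding e by (simp add: sum.distrib sum_subtractf sum_distrib_left)
  also have "\<dots> = (\<Sum>i<n. - 2 * ((l i * a i) * (\<Sum>j<n. m j * a j)) + l i * (\<Sum>j<n. m j * a j^2))"
    using assms(2) by simp
  also have "\<dots> = -2 * ((\<Sum>i<n. l i * a i) * (\<Sum>j<n. m j * a j)) + (\<Sum>i<n. l i) * (\<Sum>j<n. m j * a j^2)"
  proof -
    define S where "S = (\<Sum>j<n. m j * a j)"
    define T where "T = (\<Sum>j<n. m j * a j^2)"
    have "(\<Sum>i<n. - 2 * ((l i * a i) * S) + l i * T) = -2 * ((\<Sum>i<n. l i * a i) * S) + (\<Sum>i<n. l i) * T"
      by (simp only: sum.distrib sum_distrib_left[symmetric] sum_distrib_right[symmetric])
    then show ?thesis unfolding S_def T_def .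
  qed
  also have "\<dots> = -2 * ((\<Sum>i<n. l i * a i) * (\<Sum>j<n. m j * a j))" using assms(1) by simp
  finally show ?thesis .
qed

lemma yy_mvec: "i < n \<Longrightarrow> j < n \<Longrightarrow> yy (mvec k n p) i j = sqd k p i j"
  by (simp add: yy_def mvec_pair sqd_def)

lemma bet_mvec:
  assumes "Lam n l" "Lam n m"
  shows "bet n (mvec k n p) l m = -2 * (\<Sum>c<k. Lp n p l c * Lp n p m c)"
proof -
  have "bet n (mvec k n p) l m = (\<Sum>i<n. \<Sum>j<n. \<Sum>c<k. l i * m j * (p i c - p j c)^2)"
    unfolding bet_def by (simp add: yy_mvec sqd_def sum_distrib_left)
  also have "\<dots> = (\<Sum>i<n. \<Sum>c<k. \<Sum>j<n. l i * m j * (p i c - p j c)^2)"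
    by (rule sum.cong[OF refl], rule sum.swap)
  also have "\<dots> = (\<Sum>c<k. \<Sum>i<n. \<Sum>j<n. l i * m j * (p i c - p j c)^2)"
    by (rule sum.swap)
  also have "\<dots> = (\<Sum>c<k. -2 * (Lp n p l c * Lp n p m c))"
    using one_coord assms unfolding Lam_def Lp_def by (intro sum.cong) auto
  finally show ?thesis by (simp add: sum_distrib_left)
qed

lemma yy_lin: "yy (\<lambda>e. y e + t * v e) i j = yy y i j + t * yy v i j"
  by (simp add: yy_def)

lemma bet_lin: "bet n (\<lambda>e. y e + t * v e) l m = bet n y l m + t * bet n v l m"
  unfolding bet_def yy_lin by (simp add: algebra_simps sum.distrib sum_distrib_left)

lemma bet_lin_left: "bet n y (\<lambda>i. l1 i - a * l2 i) m = bet n y l1 m - a * bet n y l2 m"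
  unfolding bet_def by (simp add: algebra_simps sum_subtractf sum_distrib_left)

lemma lam_test:
  assumes y: "y \<in> Mdn k n" and lam: "\<And>a. a < Suc k \<Longrightarrow> Lam n (\<mu> a)"
  shows "\<exists>\<xi>. (\<exists>a<Suc k. \<xi> a \<noteq> 0) \<and> (\<forall>b<Suc k. (\<Sum>a<Suc k. \<xi> a * bet n y (\<mu> a) (\<mu> b)) = 0)"
proof -
  obtain p where yp: "y = mvec k n p" using y by (auto simp: Mdn_def)
  define V where "V = (\<lambda>a c. Lp n p (\<mu> a) c)"
  obtain \<xi> where xi: "\<exists>a\<in>{..<Suc k}. \<xi> a \<noteq> 0" "\<forall>c<k. (\<Sum>a\<in>{..<Suc k}. \<xi> a * V a c) = 0"
    using dep_lemma[of "{..<Suc k}" k V] by auto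
  show ?thesis
  proof (intro exI[of _ \<xi>] conjI allI impI)
    show "\<exists>a<Suc k. \<xi> a \<noteq> 0" using xi by auto
  next
    fix b assume b: "b < Suc k"
    have "(\<Sum>a<Suc k. \<xi> a * bet n y (\<mu> a) (\<mu> b)) = (\<Sum>a<Suc k. \<xi> a * (-2 * (\<Sum>c<k. V a c * V b c)))"
      using lam b by (intro sum.cong) (auto simp: yp bet_mvec V_def)
    also have "\<dots> = (\<Sum>a<Suc k. -2 * (\<Sum>c<k. \<xi> a * V a c * V b c))"
      by (intro sum.cong refl) (simp add: sum_distrib_left mult.assoc mult.left_commute)
    also have "\<dots> = -2 * (\<Sum>a<Suc k. \<Sum>c<k. \<xi> a * V a c * V b c)"
      by (simp only: sum_distrib_left[symmetric])
    also have "\<dots> = -2 * (\<Sum>c<k. \<Sum>a<Suc k. \<xi> a * V a c * V b c)"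
      by (subst sum.swap) simp
    also have "\<dots> = -2 * (\<Sum>c<k. (\<Sum>a<Suc k. \<xi> a * V a c) * V b c)"
      by (simp only: sum_distrib_right)
    also have "\<dots> = 0" using xi by simp
    finally show "(\<Sum>a<Suc k. \<xi> a * bet n y (\<mu> a) (\<mu> b)) = 0" .
  qed
qed

lemma double_sum_sym:
  fixes F :: "nat \<Rightarrow> nat \<Rightarrow> complex"
  assumes sym: "\<And>i j. F i j = F j i" and diag: "\<And>i. F i i = 0"
  shows "(\<Sum>i<n. \<Sum>j<n. F i j) = 2 * (\<Sum>j<n. \<Sum>i<j. F i j)"
proof (induction n)
  case 0 then show ?case by simp
next
  case (Suc n)
  have "(\<Sum>i<Suc n. \<Sum>j<Suc n. F i j) = (\<Sum>i<n. \<Sum>j<n. F i j) + (\<Sum>i<n. F i n) + (\<Sum>j<n. F n j) + F n n"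
    by (simp add: sum.distrib algebra_simps)
  also have "(\<Sum>j<n. F n j) = (\<Sum>i<n. F i n)" using sym by simp
  finally show ?case using Suc diag by (simp add: algebra_simps)
qed

lemma edges_sum:
  fixes G :: "nat set \<Rightarrow> complex"
  shows "(\<Sum>e\<in>edges n. G e) = (\<Sum>j<n. \<Sum>i<j. G {i, j})"
proof -
  have inj: "inj_on (\<lambda>(j, i). {i, j}) (SIGMA j:{..<n}. {..<j})"
    by (auto simp: inj_on_def doubleton_eq_iff)
  have img: "(\<lambda>(j, i). {i, j}) ` (SIGMA j:{..<n}. {..<j}) = edges n"
    by (auto simp: edges_def)
  have "(\<Sum>e\<in>edges n. G e) = (\<Sum>x\<in>(SIGMA j:{..<n}. {..<j}). G ((\<lambda>(j, i). {i, j}) x))"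
    using sum.reindex[OF inj, of G] img by simp
  also have "\<dots> = (\<Sum>j<n. \<Sum>i<j. G {i, j})"
    using sum.Sigma[of "{..<n}" lessThan "\<lambda>j i. G {i,j}"] by (simp add: case_prod_unfold)
  finally show ?thesis .
qed

lemma bet_edges:
  "bet n v l l = 2 * (\<Sum>e\<in>edges n. (l (Min e) * l (Max e)) * v e)"
proof -
  have "bet n v l l = 2 * (\<Sum>j<n. \<Sum>i<j. l i * l j * yy v i j)"
    unfolding bet_def by (rule double_sum_sym) (auto simp: yy_sym yy_def mult.commute)
  also have "(\<Sum>j<n. \<Sum>i<j. l i * l j * yy v i j) = (\<Sum>j<n. \<Sum>i<j. (l (Min {i,j}) * l (Max {i,j})) * v {i,j})"
    by (intro sum.cong refl) (auto simp: yy_def min_def max_def)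
  also have "\<dots> = (\<Sum>e\<in>edges n. (l (Min e) * l (Max e)) * v e)"
    by (rule edges_sum[symmetric])
  finally show ?thesis .
qed

definition inL :: "nat \<Rightarrow> nat \<Rightarrow> (nat set \<Rightarrow> complex) \<Rightarrow> (nat set \<Rightarrow> complex) \<Rightarrow> bool" where
  "inL k n y v \<longleftrightarrow> v \<in> vecs n \<and> (\<forall>t. (\<lambda>e. y e + t * v e) \<in> Mdn k n)"

definition SP :: "nat \<Rightarrow> nat \<Rightarrow> (nat set \<Rightarrow> complex) \<Rightarrow> bool" where
  "SP k n y \<longleftrightarrow> (\<forall>w. (\<forall>v. inL k n y v \<longrightarrow> (\<Sum>e\<in>edges n. w e * v e) = 0) \<longrightarrow> (\<forall>e\<in>edges n. w e = 0))"

lemma finite_edges: "finite (edges n)"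
proof -
  have "edges n \<subseteq> Pow {..<n}" by (auto simp: edges_def)
  then show ?thesis by (rule finite_subset) simp
qed

lemma mvec_vecs: "mvec k n p \<in> vecs n"
  by (simp add: vecs_def mvec_def)

lemma Mdn_vecs: "y \<in> Mdn k n \<Longrightarrow> y \<in> vecs n"
  by (auto simp: Mdn_def mvec_vecs)

lemma add_dim:
  assumes k: "k \<ge> 1"
  shows "(\<lambda>e. mvec (k - 1) n p e + t * mvec 1 n q e) \<in> Mdn k n"
proof -
  define K where "K = k - 1"
  have kK: "k = Suc K" using k by (simp add: K_def)
  define p' where "p' = (\<lambda>i c. if c < K then p i c else csqrt t * q i 0)"
  have "(\<lambda>e. mvec K n p e + t * mvec 1 n q e) = mvec k n p'"
  proof
    fix e
    show "mvec K n p e + t * mvec 1 n q e = mvec k n p' e"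
    proof (cases "e \<in> edges n")
      case True
      have s: "(\<Sum>c<K. (p' (Min e) c - p' (Max e) c)^2) = (\<Sum>c<K. (p (Min e) c - p (Max e) c)^2)"
        by (intro sum.cong) (auto simp: p'_def)
      have "(csqrt t * q (Min e) 0 - csqrt t * q (Max e) 0)^2 = (csqrt t)^2 * (q (Min e) 0 - q (Max e) 0)^2"
        by (simp add: power2_eq_square algebra_simps)
      then have "(csqrt t * q (Min e) 0 - csqrt t * q (Max e) 0)^2 = t * (q (Min e) 0 - q (Max e) 0)^2"
        by simp
      then show ?thesis using True s by (simp add: mvec_def kK p'_def)
    next
      case False
      then show ?thesis by (simp add: mvec_def)
    qed
  qed
  then show ?thesis by (simp add: Mdn_def K_def)
qed

definition dl :: "nat \<Rightarrow> nat \<Rightarrow> nat \<Rightarrow> complex" where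
  "dl a i c = (if i = a then 1 else 0)"

definition dl2 :: "nat \<Rightarrow> nat \<Rightarrow> nat \<Rightarrow> nat \<Rightarrow> complex" where
  "dl2 a b i c = (if i = a \<or> i = b then 1 else 0)"

lemma combo_edge:
  assumes ab: "a \<noteq> b" and e: "e \<in> edges n"
  shows "mvec 1 n (dl a) e + mvec 1 n (dl b) e - mvec 1 n (dl2 a b) e = (if e = {a, b} then 2 else 0)"
proof -
  obtain i j where ij: "e = {i,j}" "i < j" "j < n" using e by (auto simp: edges_def)
  then have mm: "Min e = i" "Max e = j" by auto
  show ?thesis using e ab ij(2) unfolding mvec_def mm
    by (auto simp: dl_def dl2_def ij(1) doubleton_eq_iff)
qed

lemma char_fwd:
  assumes k: "k \<ge> 1" and y: "y \<in> Mdn (k - 1) n"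
  shows "SP k n y"
  unfolding SP_def
proof (intro allI impI ballI)
  fix w e
  assume H: "\<forall>v. inL k n y v \<longrightarrow> (\<Sum>e\<in>edges n. w e * v e) = 0"
  assume e: "e \<in> edges n"
  obtain p where yp: "y = mvec (k - 1) n p" using y by (auto simp: Mdn_def)
  have L1: "inL k n y (mvec 1 n q)" for q
    unfolding inL_def using add_dim[OF k] yp mvec_vecs by auto
  obtain a b where ab: "e = {a,b}" "a < b" "b < n" using e by (auto simp: edges_def)
  have z: "(\<Sum>e\<in>edges n. w e * mvec 1 n q e) = 0" for q using H L1 by blast
  have "(\<Sum>e'\<in>edges n. w e' * (mvec 1 n (dl a) e' + mvec 1 n (dl b) e' - mvec 1 n (dl2 a b) e')) = 0"
    using z[of "dl a"] z[of "dl b"] z[of "dl2 a b"]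
    by (simp add: algebra_simps sum.distrib sum_subtractf)
  moreover have "(\<Sum>e'\<in>edges n. w e' * (mvec 1 n (dl a) e' + mvec 1 n (dl b) e' - mvec 1 n (dl2 a b) e'))
      = (\<Sum>e'\<in>edges n. if e' = e then 2 * w e else 0)"
  proof (intro sum.cong refl)
    fix x assume x: "x \<in> edges n"
    have "a \<noteq> b" using ab by simp
    then show "w x * (mvec 1 n (dl a) x + mvec 1 n (dl b) x - mvec 1 n (dl2 a b) x) = (if x = e then 2 * w e else 0)"
      using combo_edge[OF _ x, of a b] ab(1) by simp
  qed
  moreover have "(\<Sum>e'\<in>edges n. if e' = e then 2 * w e else 0) = 2 * w e"
    using e by (simp add: finite_edges)
  ultimately show "w e = 0" by simp
qed

definition mk :: "nat \<Rightarrow> (nat \<Rightarrow> complex) \<Rightarrow> nat \<Rightarrow> complex" where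
  "mk n \<xi> i = (if i = 0 then - (\<Sum>j\<in>{1..<n}. \<xi> j) else \<xi> i)"

lemma sum_split0: "n \<ge> 1 \<Longrightarrow> (\<Sum>i<n. f i) = f 0 + (\<Sum>i\<in>{1..<n}. f i)"
  for f :: "nat \<Rightarrow> complex"
  by (simp add: lessThan_atLeast0 sum.atLeast_Suc_lessThan)

lemma mk_Lam: "n \<ge> 1 \<Longrightarrow> Lam n (mk n \<xi>)"
  unfolding Lam_def by (simp add: sum_split0 mk_def)

lemma mk_Lp:
  assumes "n \<ge> 1"
  shows "Lp n p (mk n \<xi>) c = (\<Sum>i\<in>{1..<n}. \<xi> i * (p i c - p 0 c))"
proof -
  have "Lp n p (mk n \<xi>) c = - (\<Sum>j\<in>{1..<n}. \<xi> j) * p 0 c + (\<Sum>i\<in>{1..<n}. \<xi> i * p i c)"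
    unfolding Lp_def using assms by (simp add: sum_split0 mk_def)
  also have "\<dots> = (\<Sum>i\<in>{1..<n}. \<xi> i * (p i c - p 0 c))"
    by (simp add: right_diff_distrib sum_subtractf sum_distrib_right)
  finally show ?thesis .
qed

lemma bound_lemma:
  fixes \<xi> :: "nat \<Rightarrow> complex" and A :: "nat \<Rightarrow> nat \<Rightarrow> complex"
  assumes k: "k \<ge> 1"
    and eq: "\<And>b. b < k \<Longrightarrow> 2 * \<xi> b = t * (\<Sum>a<k. \<xi> a * A a b)"
    and tB: "cmod t * (\<Sum>a<k. \<Sum>b<k. cmod (A a b)) \<le> 1"
  shows "\<forall>a<k. \<xi> a = 0"
proof -
  have ne: "(\<lambda>a. cmod (\<xi> a)) ` {..<k} \<noteq> {}" using k by (auto simp: lessThan_empty_iff)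
  obtain b0 where b0': "b0 < k" "cmod (\<xi> b0) = Max ((\<lambda>a. cmod (\<xi> a)) ` {..<k})"
    using Max_in[OF _ ne] by auto
  have b0: "b0 < k" "\<forall>a<k. cmod (\<xi> a) \<le> cmod (\<xi> b0)"
    using b0' by auto
  have "2 * cmod (\<xi> b0) = cmod t * cmod (\<Sum>a<k. \<xi> a * A a b0)"
    using eq[OF b0(1)] by (metis norm_mult norm_numeral)
  also have "\<dots> \<le> cmod t * (\<Sum>a<k. cmod (\<xi> a) * cmod (A a b0))"
    by (intro mult_left_mono) (auto intro: order_trans[OF norm_sum] simp: norm_mult)
  also have "\<dots> \<le> cmod t * (\<Sum>a<k. cmod (\<xi> b0) * cmod (A a b0))"
    using b0 by (intro mult_left_mono sum_mono mult_right_mono) auto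
  also have "\<dots> = cmod (\<xi> b0) * (cmod t * (\<Sum>a<k. cmod (A a b0)))"
    by (simp add: sum_distrib_left algebra_simps)
  also have "\<dots> \<le> cmod (\<xi> b0) * 1"
  proof (intro mult_left_mono)
    have "(\<Sum>a<k. cmod (A a b0)) \<le> (\<Sum>a<k. \<Sum>b<k. cmod (A a b))"
      using b0(1) by (intro sum_mono member_le_sum) auto
    then show "cmod t * (\<Sum>a<k. cmod (A a b0)) \<le> 1"
      using tB by (meson mult_left_mono norm_ge_zero order_trans)
  qed simp
  finally have "cmod (\<xi> b0) \<le> 0" by simp
  then show ?thesis using b0 by (metis norm_le_zero_iff order_trans)
qed

lemma char_bwd:
  assumes k: "k \<ge> 1" and kn: "k + 2 \<le> n" and y: "y \<in> Mdn k n" and sp: "SP k n y"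
  shows "y \<in> Mdn (k - 1) n"
proof (rule ccontr)
  assume ny: "y \<notin> Mdn (k - 1) n"
  obtain p where yp: "y = mvec k n p" using y by (auto simp: Mdn_def)
  have n1: "n \<ge> 1" using kn by simp
  define I where "I = {1..<n}"
  define V where "V = (\<lambda>i c. p i c - p 0 c)"
  have fI: "finite I" by (simp add: I_def)
  have cI: "card I > k" using kn by (simp add: I_def)
  have span: "\<forall>x. \<exists>\<xi>. \<forall>c<k. (\<Sum>a\<in>I. \<xi> a * V a c) = x c"
  proof -
    from span_or_annih[OF fI, of k V] show ?thesis
    proof
      assume "\<exists>w. (\<exists>c<k. w c \<noteq> 0) \<and> (\<forall>a\<in>I. (\<Sum>c<k. w c * V a c) = 0)"
      then obtain w where w: "\<exists>c<k. w c \<noteq> 0" "\<forall>a\<in>I. (\<Sum>c<k. w c * V a c) = 0" by blast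
      have "mvec k n p \<in> Mdn (k - 1) n"
      proof (rule reduce_dim[OF k w(1)])
        fix i assume i: "i < n"
        show "dotk k (\<lambda>c. p i c - p 0 c) w = 0"
        proof (cases "i = 0")
          case True then show ?thesis by (simp add: dotk_def)
        next
          case False
          then have "i \<in> I" using i by (simp add: I_def)
          then show ?thesis using w(2) by (simp add: dotk_def V_def mult.commute)
        qed
      qed
      then show ?thesis using ny yp by simp
    qed
  qed
  have "\<forall>a. \<exists>\<xi>. \<forall>c<k. (\<Sum>i\<in>I. \<xi> i * V i c) = (if c = a then 1 else 0)"
  proof
    fix a
    show "\<exists>\<xi>. \<forall>c<k. (\<Sum>i\<in>I. \<xi> i * V i c) = (if c = a then 1 else 0)"
      using spec[OF span, of "\<lambda>c. if c = a then 1 else 0"] by simp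
  qed
  from choice[OF this] obtain \<Xi> where Xi0: "\<forall>a. \<forall>c<k. (\<Sum>i\<in>I. \<Xi> a i * V i c) = (if c = a then 1 else 0)"
    by (elim exE)
  have Xi: "\<And>a c. c < k \<Longrightarrow> (\<Sum>i\<in>I. \<Xi> a i * V i c) = (if c = a then 1 else 0)"
    using Xi0 by blast
  define lam where "lam = (\<lambda>a. mk n (\<Xi> a))"
  have lam_Lam: "Lam n (lam a)" for a using mk_Lam[OF n1] by (simp add: lam_def)
  have lam_Lp: "c < k \<Longrightarrow> Lp n p (lam a) c = (if c = a then 1 else 0)" for a c
    using Xi mk_Lp[OF n1] by (simp add: lam_def V_def I_def)
  obtain \<kappa>' where kp: "\<exists>i\<in>I. \<kappa>' i \<noteq> 0" "\<forall>c<k. (\<Sum>i\<in>I. \<kappa>' i * V i c) = 0"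
    using dep_lemma[OF fI cI, of V] by blast
  define \<kappa> where "\<kappa> = mk n \<kappa>'"
  have ka_Lam: "Lam n \<kappa>" using mk_Lam[OF n1] by (simp add: \<kappa>_def)
  have ka_Lp: "c < k \<Longrightarrow> Lp n p \<kappa> c = 0" for c
    using kp mk_Lp[OF n1] by (simp add: \<kappa>_def V_def I_def)
  obtain i1 where i1: "i1 \<in> I" "\<kappa> i1 \<noteq> 0" using kp(1) by (auto simp: \<kappa>_def mk_def I_def)
  have "\<exists>i2<n. i2 \<noteq> i1 \<and> \<kappa> i2 \<noteq> 0"
  proof (rule ccontr)
    assume "\<not> ?thesis"
    then have z: "\<forall>i<n. i \<noteq> i1 \<longrightarrow> \<kappa> i = 0" by auto
    have i1n: "i1 < n" using i1 by (simp add: I_def)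
    have "(\<Sum>i<n. \<kappa> i) = (\<Sum>i<n. if i = i1 then \<kappa> i1 else 0)"
      using z by (intro sum.cong) auto
    also have "\<dots> = \<kappa> i1" using i1n by simp
    finally show False using ka_Lam i1 by (simp add: Lam_def)
  qed
  then obtain i2 where i2: "i2 < n" "i2 \<noteq> i1" "\<kappa> i2 \<noteq> 0" by blast
  define w where "w = (\<lambda>e. \<kappa> (Min e) * \<kappa> (Max e))"
  have wnz: "w {i1, i2} \<noteq> 0"
    using i1 i2 by (cases "i1 < i2") (auto simp: w_def min_def max_def)
  have e12: "{i1, i2} \<in> edges n" using i1 i2 by (simp add: edges_iff I_def)
  have annih: "(\<Sum>e\<in>edges n. w e * v e) = 0" if v: "inL k n y v" for v
  proof (rule ccontr)
    assume nz: "(\<Sum>e\<in>edges n. w e * v e) \<noteq> 0"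
    define C where "C = bet n v \<kappa> \<kappa>"
    have C: "C \<noteq> 0" using nz bet_edges[of n v \<kappa>] by (simp add: C_def w_def)
    define lam' where "lam' = (\<lambda>a i. lam a i - (bet n v (lam a) \<kappa> / C) * \<kappa> i)"
    have lam'_Lam: "Lam n (lam' a)" for a
    proof -
      have "(\<Sum>i<n. lam' a i) = (\<Sum>i<n. lam a i) - (bet n v (lam a) \<kappa> / C) * (\<Sum>i<n. \<kappa> i)"
        by (simp add: lam'_def sum_subtractf sum_distrib_left)
      then show ?thesis using lam_Lam[of a] ka_Lam by (simp add: Lam_def)
    qed
    have lam'_Lp: "c < k \<Longrightarrow> Lp n p (lam' a) c = (if c = a then 1 else 0)" for a c
    proof -
      assume c: "c < k"
      have "Lp n p (lam' a) c = Lp n p (lam a) c - (bet n v (lam a) \<kappa> / C) * Lp n p \<kappa> c"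
        by (simp add: Lp_def lam'_def algebra_simps sum_subtractf sum_distrib_left)
      then show ?thesis using c lam_Lp ka_Lp by simp
    qed
    have lam'_v: "bet n v (lam' a) \<kappa> = 0" for a
      unfolding lam'_def bet_lin_left using C by (simp add: C_def)
    define \<mu> where "\<mu> = (\<lambda>a. if a < k then lam' a else \<kappa>)"
    have mu_Lam: "Lam n (\<mu> a)" for a using lam'_Lam ka_Lam by (simp add: \<mu>_def)
    have mu_Lp: "c < k \<Longrightarrow> Lp n p (\<mu> a) c = (if a < k \<and> c = a then 1 else 0)" for a c
      using lam'_Lp ka_Lp by (simp add: \<mu>_def)
    define A where "A = (\<lambda>a b. bet n v (\<mu> a) (\<mu> b))"
    define B where "B = (\<Sum>a<k. \<Sum>b<k. cmod (A a b)) + 1"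
    have Bpos: "B > 0" unfolding B_def by (simp add: add_nonneg_pos sum_nonneg)
    define t where "t = complex_of_real (1 / (2 * B))"
    have t0: "t \<noteq> 0" using Bpos by (simp add: t_def)
    have tB: "cmod t * (\<Sum>a<k. \<Sum>b<k. cmod (A a b)) \<le> 1"
    proof -
      have ct: "cmod t = 1 / (2 * B)" unfolding t_def norm_of_real using Bpos by simp
      have "(\<Sum>a<k. \<Sum>b<k. cmod (A a b)) \<le> B" by (simp add: B_def)
      then have "cmod t * (\<Sum>a<k. \<Sum>b<k. cmod (A a b)) \<le> cmod t * B"
        by (intro mult_left_mono) auto
      also have "cmod t * B = 1 / 2" using Bpos ct by simp
      finally show ?thesis by simp
    qed
    have yt: "(\<lambda>e. y e + t * v e) \<in> Mdn k n" using v by (simp add: inL_def)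
    obtain \<xi> where xi: "\<exists>a<Suc k. \<xi> a \<noteq> 0"
      "\<forall>b<Suc k. (\<Sum>a<Suc k. \<xi> a * bet n (\<lambda>e. y e + t * v e) (\<mu> a) (\<mu> b)) = 0"
      using lam_test[OF yt, of \<mu>] mu_Lam by blast
    have by_: "bet n y (\<mu> a) (\<mu> b) = (if a < k \<and> b < k \<and> a = b then -2 else 0)" for a b
    proof -
      have "bet n y (\<mu> a) (\<mu> b) = -2 * (\<Sum>c<k. Lp n p (\<mu> a) c * Lp n p (\<mu> b) c)"
        using mu_Lam by (simp add: yp bet_mvec)
      also have "(\<Sum>c<k. Lp n p (\<mu> a) c * Lp n p (\<mu> b) c) = (\<Sum>c<k. if a < k \<and> b < k \<and> a = b \<and> c = a then 1 else 0)"
        using mu_Lp by (intro sum.cong) auto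
      also have "\<dots> = (if a < k \<and> b < k \<and> a = b then 1 else 0)"
        by (cases "a < k \<and> b < k \<and> a = b") auto
      finally show ?thesis by simp
    qed
    have full: "bet n (\<lambda>e. y e + t * v e) (\<mu> a) (\<mu> b) = (if a < k \<and> b < k \<and> a = b then -2 else 0) + t * A a b" for a b
      by (simp add: bet_lin by_ A_def)
    have Ak: "a < k \<Longrightarrow> A a k = 0" for a by (simp add: A_def \<mu>_def lam'_v)
    have Akk: "A k k = C" by (simp add: A_def \<mu>_def C_def)
    have "(\<Sum>a<Suc k. \<xi> a * bet n (\<lambda>e. y e + t * v e) (\<mu> a) (\<mu> k)) = \<xi> k * (t * C)"
    proof -
      have "(\<Sum>a<Suc k. \<xi> a * bet n (\<lambda>e. y e + t * v e) (\<mu> a) (\<mu> k)) = (\<Sum>a<Suc k. if a = k then \<xi> k * (t * C) else 0)"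
        by (intro sum.cong refl) (auto simp: full Ak Akk)
      also have "\<dots> = \<xi> k * (t * C)" by simp
      finally show ?thesis .
    qed
    then have xik: "\<xi> k = 0" using xi(2) t0 C by auto
    have eqb: "2 * \<xi> b = t * (\<Sum>a<k. \<xi> a * A a b)" if b: "b < k" for b
    proof -
      have "0 = (\<Sum>a<Suc k. \<xi> a * bet n (\<lambda>e. y e + t * v e) (\<mu> a) (\<mu> b))" using xi(2) b by simp
      also have "\<dots> = (\<Sum>a<k. \<xi> a * ((if a = b then -2 else 0) + t * A a b))"
        using b xik by (simp add: full)
      also have "\<dots> = (\<Sum>a<k. (if a = b then -2 * \<xi> b else 0)) + t * (\<Sum>a<k. \<xi> a * A a b)"
      proof -
        have "\<xi> a * ((if a = b then -2 else 0) + t * A a b) = (if a = b then -2 * \<xi> b else 0) + t * (\<xi> a * A a b)" for a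
          by (auto simp: algebra_simps)
        then have "(\<Sum>a<k. \<xi> a * ((if a = b then -2 else 0) + t * A a b)) = (\<Sum>a<k. (if a = b then -2 * \<xi> b else 0) + t * (\<xi> a * A a b))"
          by simp
        also have "\<dots> = (\<Sum>a<k. (if a = b then -2 * \<xi> b else 0)) + t * (\<Sum>a<k. \<xi> a * A a b)"
          by (simp only: sum.distrib sum_distrib_left)
        finally show ?thesis .
      qed
      also have "\<dots> = -2 * \<xi> b + t * (\<Sum>a<k. \<xi> a * A a b)" using b by simp
      finally show ?thesis by (simp add: algebra_simps)
    qed
    have "\<forall>a<k. \<xi> a = 0" by (rule bound_lemma[OF k eqb tB])
    then show False using xi(1) xik by (metis less_Suc_eq)
  qed
  have "\<forall>e\<in>edges n. w e = 0" using sp annih unfolding SP_def by blast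
  then show False using wnz e12 by blast
qed

definition DPmap :: "nat \<Rightarrow> (nat set \<Rightarrow> complex) \<Rightarrow> (nat set \<Rightarrow> nat set) \<Rightarrow> (nat set \<Rightarrow> complex) \<Rightarrow> nat set \<Rightarrow> complex" where
  "DPmap n D \<pi> x = (\<lambda>e. if e \<in> edges n then D e * x (inv \<pi> e) else 0)"

definition Pres :: "nat \<Rightarrow> nat \<Rightarrow> (nat set \<Rightarrow> complex) \<Rightarrow> (nat set \<Rightarrow> nat set) \<Rightarrow> bool" where
  "Pres k n D \<pi> \<longleftrightarrow> (\<forall>x\<in>vecs n. x \<in> Mdn k n \<longleftrightarrow> DPmap n D \<pi> x \<in> Mdn k n)"

lemma matvec_DP:
  assumes p: "\<pi> permutes edges n"
  shows "matvec n (matmul n (diag_mat D) (perm_mat \<pi>)) x = DPmap n D \<pi> x"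
proof
  fix e
  have mm: "matmul n (diag_mat D) (perm_mat \<pi>) e g = (if e \<in> edges n \<and> e = \<pi> g then D e else 0)" for g
  proof -
    have "matmul n (diag_mat D) (perm_mat \<pi>) e g = (\<Sum>f\<in>edges n. if f = e then (if e = \<pi> g then D e else 0) else 0)"
      unfolding matmul_def diag_mat_def perm_mat_def by (intro sum.cong) auto
    also have "\<dots> = (if e \<in> edges n \<and> e = \<pi> g then D e else 0)"
      by (auto simp: finite_edges)
    finally show ?thesis .
  qed
  show "matvec n (matmul n (diag_mat D) (perm_mat \<pi>)) x e = DPmap n D \<pi> x e"
  proof (cases "e \<in> edges n")
    case True
    have ie: "inv \<pi> e \<in> edges n" using True permutes_inv[OF p] by (simp add: permutes_in_image)
    have "(\<Sum>g\<in>edges n. matmul n (diag_mat D) (perm_mat \<pi>) e g * x g)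
        = (\<Sum>g\<in>edges n. if g = inv \<pi> e then D e * x g else 0)"
    proof (intro sum.cong refl)
      fix g
      have "(e = \<pi> g) = (g = inv \<pi> e)" using permutes_inverses[OF p] by metis
      then show "matmul n (diag_mat D) (perm_mat \<pi>) e g * x g = (if g = inv \<pi> e then D e * x g else 0)"
        using True by (simp add: mm)
    qed
    also have "\<dots> = D e * x (inv \<pi> e)" using ie by (simp add: finite_edges)
    finally show ?thesis using True by (simp add: matvec_def DPmap_def)
  next
    case False
    then show ?thesis by (simp add: matvec_def DPmap_def)
  qed
qed

lemma DPmap_vecs: "DPmap n D \<pi> x \<in> vecs n"
  by (simp add: DPmap_def vecs_def)

lemma vecs_lin: "x \<in> vecs n \<Longrightarrow> v \<in> vecs n \<Longrightarrow> (\<lambda>e. x e + t * v e) \<in> vecs n"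
  by (simp add: vecs_def)

lemma DPmap_lin: "DPmap n D \<pi> (\<lambda>e. x e + t * v e) = (\<lambda>e. DPmap n D \<pi> x e + t * DPmap n D \<pi> v e)"
  by (auto simp: DPmap_def algebra_simps)

lemma DPmap_reindex:
  assumes p: "\<pi> permutes edges n"
  shows "(\<Sum>e\<in>edges n. w e * DPmap n D \<pi> v e) = (\<Sum>f\<in>edges n. w (\<pi> f) * D (\<pi> f) * v f)"
proof -
  have inj: "inj_on \<pi> (edges n)" using p by (meson permutes_inj_on)
  have img: "\<pi> ` edges n = edges n" using p by (rule permutes_image)
  have "(\<Sum>e\<in>edges n. w e * DPmap n D \<pi> v e) = (\<Sum>f\<in>edges n. w (\<pi> f) * DPmap n D \<pi> v (\<pi> f))"
    using sum.reindex[OF inj, of "\<lambda>e. w e * DPmap n D \<pi> v e"] img by simp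
  also have "\<dots> = (\<Sum>f\<in>edges n. w (\<pi> f) * D (\<pi> f) * v f)"
  proof (intro sum.cong refl)
    fix f assume f: "f \<in> edges n"
    have "\<pi> f \<in> edges n" using f p by (simp add: permutes_in_image)
    moreover have "inv \<pi> (\<pi> f) = f" using permutes_inverses[OF p] by metis
    ultimately show "w (\<pi> f) * DPmap n D \<pi> v (\<pi> f) = w (\<pi> f) * D (\<pi> f) * v f"
      by (simp add: DPmap_def)
  qed
  finally show ?thesis .
qed

lemma DPmap_surj:
  assumes p: "\<pi> permutes edges n" and D: "\<forall>e\<in>edges n. D e \<noteq> 0" and u: "u \<in> vecs n"
  shows "\<exists>v\<in>vecs n. DPmap n D \<pi> v = u \<and> (\<forall>f\<in>edges n. v f = u (\<pi> f) / D (\<pi> f))"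
proof (intro bexI conjI)
  define v where "v = (\<lambda>f. if f \<in> edges n then u (\<pi> f) / D (\<pi> f) else 0)"
  show "v \<in> vecs n" by (simp add: v_def vecs_def)
  show "\<forall>f\<in>edges n. v f = u (\<pi> f) / D (\<pi> f)" by (simp add: v_def)
  show "DPmap n D \<pi> v = u"
  proof
    fix e
    show "DPmap n D \<pi> v e = u e"
    proof (cases "e \<in> edges n")
      case True
      have ie: "inv \<pi> e \<in> edges n" using True permutes_inv[OF p] by (simp add: permutes_in_image)
      have pe: "\<pi> (inv \<pi> e) = e" using permutes_inverses[OF p] by metis
      show ?thesis using True ie D by (simp add: DPmap_def v_def pe)
    next
      case False
      then show ?thesis using u by (simp add: DPmap_def vecs_def)
    qed
  qed
qed

lemma SP_transfer:
  assumes p: "\<pi> permutes edges n" and D: "\<forall>e\<in>edges n. D e \<noteq> 0"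
    and pres: "Pres k n D \<pi>" and x: "x \<in> vecs n"
  shows "SP k n x \<longleftrightarrow> SP k n (DPmap n D \<pi> x)"
proof
  assume sp: "SP k n x"
  show "SP k n (DPmap n D \<pi> x)"
    unfolding SP_def
  proof (intro allI impI ballI)
    fix w e
    assume H: "\<forall>u. inL k n (DPmap n D \<pi> x) u \<longrightarrow> (\<Sum>e\<in>edges n. w e * u e) = 0"
    assume e: "e \<in> edges n"
    define w' where "w' = (\<lambda>f. w (\<pi> f) * D (\<pi> f))"
    have "\<forall>v. inL k n x v \<longrightarrow> (\<Sum>f\<in>edges n. w' f * v f) = 0"
    proof (intro allI impI)
      fix v assume v: "inL k n x v"
      have "inL k n (DPmap n D \<pi> x) (DPmap n D \<pi> v)"
        unfolding inL_def
      proof (intro conjI allI)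
        show "DPmap n D \<pi> v \<in> vecs n" by (rule DPmap_vecs)
        fix t
        have "(\<lambda>e. x e + t * v e) \<in> vecs n" using x v by (simp add: inL_def vecs_lin)
        moreover have "(\<lambda>e. x e + t * v e) \<in> Mdn k n" using v by (simp add: inL_def)
        ultimately have "DPmap n D \<pi> (\<lambda>e. x e + t * v e) \<in> Mdn k n" using pres by (simp add: Pres_def)
        then show "(\<lambda>e. DPmap n D \<pi> x e + t * DPmap n D \<pi> v e) \<in> Mdn k n" by (simp add: DPmap_lin)
      qed
      then have "(\<Sum>e\<in>edges n. w e * DPmap n D \<pi> v e) = 0" using H by blast
      then show "(\<Sum>f\<in>edges n. w' f * v f) = 0" by (simp add: DPmap_reindex[OF p] w'_def)
    qed
    then have z: "\<forall>f\<in>edges n. w' f = 0" using sp by (simp add: SP_def)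
    have ie: "inv \<pi> e \<in> edges n" using e permutes_inv[OF p] by (simp add: permutes_in_image)
    have pe: "\<pi> (inv \<pi> e) = e" using permutes_inverses[OF p] by metis
    show "w e = 0" using z ie pe D e by (auto simp: w'_def)
  qed
next
  assume sp: "SP k n (DPmap n D \<pi> x)"
  show "SP k n x"
    unfolding SP_def
  proof (intro allI impI ballI)
    fix w f
    assume H: "\<forall>v. inL k n x v \<longrightarrow> (\<Sum>e\<in>edges n. w e * v e) = 0"
    assume f: "f \<in> edges n"
    define w'' where "w'' = (\<lambda>e. w (inv \<pi> e) / D e)"
    have "\<forall>u. inL k n (DPmap n D \<pi> x) u \<longrightarrow> (\<Sum>e\<in>edges n. w'' e * u e) = 0"
    proof (intro allI impI)
      fix u assume u: "inL k n (DPmap n D \<pi> x) u"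
      have uv: "u \<in> vecs n" using u by (simp add: inL_def)
      obtain v where v: "v \<in> vecs n" "DPmap n D \<pi> v = u" "\<forall>f\<in>edges n. v f = u (\<pi> f) / D (\<pi> f)"
        using DPmap_surj[OF p D uv] by blast
      have "inL k n x v"
        unfolding inL_def
      proof (intro conjI allI)
        show "v \<in> vecs n" by fact
        fix t
        have xv: "(\<lambda>e. x e + t * v e) \<in> vecs n" using x v by (simp add: vecs_lin)
        have "(\<lambda>e. DPmap n D \<pi> x e + t * u e) \<in> Mdn k n" using u by (simp add: inL_def)
        then have "DPmap n D \<pi> (\<lambda>e. x e + t * v e) \<in> Mdn k n" using v by (simp add: DPmap_lin)
        then show "(\<lambda>e. x e + t * v e) \<in> Mdn k n" using pres xv by (simp add: Pres_def)
      qed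
      then have "(\<Sum>e\<in>edges n. w e * v e) = 0" using H by blast
      moreover have "(\<Sum>e\<in>edges n. w'' e * u e) = (\<Sum>e\<in>edges n. w e * v e)"
      proof -
        have inj: "inj_on \<pi> (edges n)" using p by (meson permutes_inj_on)
        have img: "\<pi> ` edges n = edges n" using p by (rule permutes_image)
        have "(\<Sum>e\<in>edges n. w'' e * u e) = (\<Sum>g\<in>edges n. w'' (\<pi> g) * u (\<pi> g))"
          using sum.reindex[OF inj, of "\<lambda>e. w'' e * u e"] img by simp
        also have "\<dots> = (\<Sum>g\<in>edges n. w g * v g)"
        proof (intro sum.cong refl)
          fix g assume g: "g \<in> edges n"
          have "inv \<pi> (\<pi> g) = g" using permutes_inverses[OF p] by metis
          then show "w'' (\<pi> g) * u (\<pi> g) = w g * v g" using v(3) g by (simp add: w''_def)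
        qed
        finally show ?thesis .
      qed
      ultimately show "(\<Sum>e\<in>edges n. w'' e * u e) = 0" by simp
    qed
    then have z: "\<forall>e\<in>edges n. w'' e = 0" using sp by (simp add: SP_def)
    have pf: "\<pi> f \<in> edges n" using f p by (simp add: permutes_in_image)
    have ipf: "inv \<pi> (\<pi> f) = f" using permutes_inverses[OF p] by metis
    show "w f = 0" using z pf ipf D by (metis divide_eq_0_iff w''_def)
  qed
qed

lemma Mdn_mono: "k \<ge> 1 \<Longrightarrow> y \<in> Mdn (k - 1) n \<Longrightarrow> y \<in> Mdn k n"
  using add_dim[of k n _ 0] by (auto simp: Mdn_def)

lemma pres_step:
  assumes k: "k \<ge> 2" and kn: "k + 2 \<le> n" and p: "\<pi> permutes edges n" and D: "\<forall>e\<in>edges n. D e \<noteq> 0"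
    and pres: "Pres k n D \<pi>"
  shows "Pres (k - 1) n D \<pi>"
  unfolding Pres_def
proof (intro ballI)
  fix x assume x: "x \<in> vecs n"
  have k1: "k \<ge> 1" using k by simp
  have ch: "z \<in> Mdn (k - 1) n \<longleftrightarrow> z \<in> Mdn k n \<and> SP k n z" for z
    using Mdn_mono[OF k1] char_fwd[OF k1] char_bwd[OF k1 kn] by blast
  show "x \<in> Mdn (k - 1) n \<longleftrightarrow> DPmap n D \<pi> x \<in> Mdn (k - 1) n"
    unfolding ch using pres x SP_transfer[OF p D pres x] by (simp add: Pres_def)
qed

lemma nat_prod_ge:
  fixes s t :: nat
  assumes "s \<ge> 1" "t \<ge> 1"
  shows "s * t \<ge> s + t - 1" and "s * t = s + t - 1 \<Longrightarrow> s = 1 \<or> t = 1"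
proof -
  obtain a b where ab: "s = Suc a" "t = Suc b" using assms by (metis Suc_le_D One_nat_def)
  show "s * t \<ge> s + t - 1" using ab by simp
  show "s * t = s + t - 1 \<Longrightarrow> s = 1 \<or> t = 1" using ab by simp
qed

lemma card_cut:
  assumes "X \<inter> Y = {}" "finite X" "finite Y"
  shows "card {{x, y} | x y. x \<in> X \<and> y \<in> Y} = card X * card Y"
proof -
  have eq: "{{x, y} | x y. x \<in> X \<and> y \<in> Y} = (\<lambda>(x, y). {x, y}) ` (X \<times> Y)" by auto
  have "inj_on (\<lambda>(x, y). {x, y}) (X \<times> Y)"
    using assms(1) by (auto simp: inj_on_def doubleton_eq_iff)
  then show ?thesis unfolding eq by (simp add: card_image card_cartesian_product)
qed

lemma star_mem:
  assumes "e \<in> edges n" "v \<in> e"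
  shows "\<exists>y. e = {v, y} \<and> y < n \<and> y \<noteq> v"
proof -
  obtain i j where ij: "e = {i,j}" "i < j" "j < n" using assms(1) by (auto simp: edges_def)
  show ?thesis
  proof (cases "v = i")
    case True then show ?thesis using ij by auto
  next
    case False
    then have "v = j" using ij assms(2) by auto
    then have "e = {v, i}" using ij by auto
    then show ?thesis using ij \<open>v = j\<close> by auto
  qed
qed

lemma star_lemma:
  fixes a :: "nat \<Rightarrow> complex" and E :: "nat set set"
  assumes n3: "n \<ge> 3" and Esub: "E \<subseteq> edges n" and cE: "card E = n - 1"
    and D: "\<forall>e\<in>edges n. D e \<noteq> 0"
    and H: "\<And>i j. i < n \<Longrightarrow> j < n \<Longrightarrow> i \<noteq> j \<Longrightarrow> (a i - a j)^2 = (if {i, j} \<in> E then D {i, j} else 0)"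
  shows "\<exists>v<n. E = {e \<in> edges n. v \<in> e} \<and> (\<forall>e\<in>E. \<forall>e'\<in>E. D e = D e')"
proof -
  have eqiff: "a i = a j \<longleftrightarrow> {i, j} \<notin> E" if "i < n" "j < n" "i \<noteq> j" for i j
  proof -
    have "{i,j} \<in> edges n" using that by (simp add: edges_iff)
    then show ?thesis using H[OF that] D by auto
  qed
  have fE: "finite E" using Esub finite_subset finite_edges by blast
  have "E \<noteq> {}" using cE n3 by auto
  then obtain e0 where e0: "e0 \<in> E" by blast
  then obtain i0 j0 where ij0: "e0 = {i0, j0}" "i0 < j0" "j0 < n" using Esub by (auto simp: edges_def)
  define X where "X = {l. l < n \<and> a l = a i0}"
  define Y where "Y = {..<n} - X"
  have XY: "X \<inter> Y = {}" "finite X" "finite Y" by (auto simp: X_def Y_def)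
  have i0X: "i0 \<in> X" using ij0 by (simp add: X_def)
  have j0Y: "j0 \<in> Y" using ij0 e0 eqiff[of j0 i0] by (auto simp: X_def Y_def insert_commute)
  have XYn: "card X + card Y = n"
  proof -
    have Xs: "X \<subseteq> {..<n}" by (auto simp: X_def)
    then have "card X \<le> n" using card_mono[OF finite_lessThan Xs] by simp
    then show ?thesis unfolding Y_def using Xs by (simp add: card_Diff_subset XY(2))
  qed
  define cut where "cut = {{x, y} | x y. x \<in> X \<and> y \<in> Y}"
  have cutE: "cut \<subseteq> E"
  proof
    fix e assume "e \<in> cut"
    then obtain x y where xy: "e = {x,y}" "x \<in> X" "y \<in> Y" by (auto simp: cut_def)
    then have "x < n" "y < n" "x \<noteq> y" "a x \<noteq> a y" by (auto simp: X_def Y_def)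
    then show "e \<in> E" using eqiff xy(1) by blast
  qed
  have cc: "card cut = card X * card Y" unfolding cut_def by (rule card_cut[OF XY])
  have sX: "card X \<ge> 1" using i0X XY(2) by (metis One_nat_def Suc_leI card_gt_0_iff empty_iff)
  have sY: "card Y \<ge> 1" using j0Y XY(3) by (metis One_nat_def Suc_leI card_gt_0_iff empty_iff)
  have "card cut \<le> card E" by (rule card_mono[OF fE cutE])
  moreover have "card X * card Y \<ge> card X + card Y - 1" using nat_prod_ge(1)[OF sX sY] .
  ultimately have eqc: "card X * card Y = card X + card Y - 1" using cc cE XYn by linarith
  then have cutE': "cut = E" using card_subset_eq[OF fE cutE] cc cE XYn by simp
  have alt: "card X = 1 \<or> card Y = 1" using nat_prod_ge(2)[OF sX sY eqc] .
  have "\<exists>v<n. E = {e \<in> edges n. v \<in> e}"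
  proof (cases "card X = 1")
    case True
    then obtain x where Xx: "X = {x}" by (metis card_1_singletonE)
    then have x: "x = i0" using i0X by simp
    have "E = {e \<in> edges n. i0 \<in> e}"
    proof
      show "E \<subseteq> {e \<in> edges n. i0 \<in> e}" using cutE' Esub by (auto simp: cut_def Xx x)
      show "{e \<in> edges n. i0 \<in> e} \<subseteq> E"
      proof
        fix e assume e: "e \<in> {e \<in> edges n. i0 \<in> e}"
        then obtain y where y: "e = {i0, y}" "y < n" "y \<noteq> i0" using star_mem[of e n i0] by auto
        then have "y \<in> Y" using Xx x by (simp add: Y_def)
        then show "e \<in> E" using cutE' y(1) i0X unfolding cut_def by blast
      qed
    qed
    moreover have "i0 < n" using ij0 by simp
    ultimately show ?thesis by blast
  next
    case False
    then have "card Y = 1" using alt by simp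
    then obtain y0 where Yy: "Y = {y0}" by (metis card_1_singletonE)
    have y0: "y0 < n" using Yy by (auto simp: Y_def)
    have "E = {e \<in> edges n. y0 \<in> e}"
    proof
      show "E \<subseteq> {e \<in> edges n. y0 \<in> e}"
      proof
        fix e assume e: "e \<in> E"
        then obtain x y where "e = {x, y}" "y \<in> Y" using cutE' unfolding cut_def by blast
        then have "y0 \<in> e" using Yy by simp
        then show "e \<in> {e \<in> edges n. y0 \<in> e}" using e Esub by blast
      qed
      show "{e \<in> edges n. y0 \<in> e} \<subseteq> E"
      proof
        fix e assume e: "e \<in> {e \<in> edges n. y0 \<in> e}"
        then obtain x where xx: "e = {y0, x}" "x < n" "x \<noteq> y0" using star_mem[of e n y0] by auto
        then have "x \<in> X" using Yy by (auto simp: Y_def)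
        moreover have "e = {x, y0}" using xx by auto
        ultimately show "e \<in> E" using cutE' Yy unfolding cut_def by blast
      qed
    qed
    then show ?thesis using y0 by auto
  qed
  then obtain v where v: "v < n" "E = {e \<in> edges n. v \<in> e}" by blast
  have Dval: "D {v, y} = (a v - a y)^2" if "y < n" "y \<noteq> v" for y
  proof -
    have "{v, y} \<in> E" using v that by (simp add: edges_iff)
    then show ?thesis using H[of v y] v that by simp
  qed
  have "\<forall>e\<in>E. \<forall>e'\<in>E. D e = D e'"
  proof (intro ballI)
    fix e e' assume e: "e \<in> E" and e': "e' \<in> E"
    obtain y where y: "e = {v, y}" "y < n" "y \<noteq> v"
      using e v star_mem[of e n v] by auto
    obtain y' where y': "e' = {v, y'}" "y' < n" "y' \<noteq> v"
      using e' v star_mem[of e' n v] by auto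
    show "D e = D e'"
    proof (cases "y = y'")
      case True then show ?thesis using y y' by simp
    next
      case False
      have "{y, y'} \<notin> E" using v y y' False by auto
      then have "a y = a y'" using eqiff[of y y'] y y' False by simp
      then show ?thesis using y y' Dval by simp
    qed
  qed
  then show ?thesis using v by blast
qed

definition star :: "nat \<Rightarrow> nat \<Rightarrow> nat set set" where
  "star n v = {e \<in> edges n. v \<in> e}"

lemma card_star:
  assumes "v < n"
  shows "card (star n v) = n - 1"
proof -
  have eq: "star n v = (\<lambda>j. {v, j}) ` ({..<n} - {v})"
  proof
    show "star n v \<subseteq> (\<lambda>j. {v, j}) ` ({..<n} - {v})"
    proof
      fix e assume "e \<in> star n v"
      then obtain y where "e = {v, y}" "y < n" "y \<noteq> v" using star_mem[of e n v] by (auto simp: star_def)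
      then show "e \<in> (\<lambda>j. {v, j}) ` ({..<n} - {v})" by auto
    qed
    show "(\<lambda>j. {v, j}) ` ({..<n} - {v}) \<subseteq> star n v"
      using assms by (auto simp: star_def edges_iff)
  qed
  have "inj_on (\<lambda>j. {v, j}) ({..<n} - {v})"
    by (auto simp: inj_on_def doubleton_eq_iff)
  then show ?thesis unfolding eq using assms by (simp add: card_image)
qed

lemma star_inj:
  assumes "n \<ge> 3" "u < n" "w < n" "star n u = star n w"
  shows "u = w"
proof (rule ccontr)
  assume uw: "u \<noteq> w"
  obtain l where l: "l < n" "l \<noteq> u" "l \<noteq> w"
  proof -
    have "\<exists>l\<in>{0,1,2::nat}. l \<noteq> u \<and> l \<noteq> w" using uw by auto
    then obtain l0 where l0: "l0 \<in> {0,1,2::nat}" "l0 \<noteq> u" "l0 \<noteq> w" by blast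
    have "l0 < n" using l0(1) assms(1) by auto
    then show ?thesis using that[of l0] l0 by blast
  qed
  have "{u, l} \<in> star n u" using l assms(2) by (simp add: star_def edges_iff)
  then have "{u, l} \<in> star n w" using assms(4) by simp
  then have "w \<in> {u, l}" by (simp add: star_def)
  then show False using uw l by auto
qed

lemma dl_val: "f \<in> edges n \<Longrightarrow> mvec 1 n (dl u) f = (if u \<in> f then 1 else 0)"
proof -
  assume f: "f \<in> edges n"
  then obtain i j where ij: "f = {i,j}" "i < j" "j < n" by (auto simp: edges_def)
  then have "Min f = i" "Max f = j" by auto
  then show ?thesis using f ij by (auto simp: mvec_def dl_def)
qed

lemma pres_top:
  assumes p: "\<pi> permutes edges n" and la: "lin_aut d n (matmul n (diag_mat D) (perm_mat \<pi>))"
  shows "Pres d n D \<pi>"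
proof -
  have mv: "matvec n (matmul n (diag_mat D) (perm_mat \<pi>)) = DPmap n D \<pi>"
    using matvec_DP[OF p] by blast
  have inj: "inj_on (DPmap n D \<pi>) (vecs n)" and bij: "bij_betw (DPmap n D \<pi>) (Mdn d n) (Mdn d n)"
    using la by (auto simp: lin_aut_def nonsingular_def mv)
  show ?thesis
    unfolding Pres_def
  proof (intro ballI iffI)
    fix x assume "x \<in> Mdn d n"
    then show "DPmap n D \<pi> x \<in> Mdn d n" using bij by (simp add: bij_betw_apply)
  next
    fix x assume x: "x \<in> vecs n" and m: "DPmap n D \<pi> x \<in> Mdn d n"
    then obtain x' where x': "x' \<in> Mdn d n" "DPmap n D \<pi> x' = DPmap n D \<pi> x"
      using bij unfolding bij_betw_def by (metis imageE)
    then have "x' = x" using inj x Mdn_vecs by (metis inj_on_def)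
    then show "x \<in> Mdn d n" using x' by simp
  qed
qed

lemma pres_one:
  assumes d: "d \<ge> 1" and n: "n \<ge> d + 2" and D: "\<forall>e\<in>edges n. D e \<noteq> 0"
    and p: "\<pi> permutes edges n" and top: "Pres d n D \<pi>"
  shows "Pres 1 n D \<pi>"
proof -
  have "\<forall>j. j \<le> d - 1 \<longrightarrow> Pres (d - j) n D \<pi>"
  proof (intro allI)
    fix j show "j \<le> d - 1 \<longrightarrow> Pres (d - j) n D \<pi>"
    proof (induction j)
      case 0 then show ?case using top by simp
    next
      case (Suc j)
      show ?case
      proof
        assume j: "Suc j \<le> d - 1"
        then have pj: "Pres (d - j) n D \<pi>" using Suc by simp
        have a1: "2 \<le> d - j" using j by linarith
        have a2: "d - j + 2 \<le> n" using n by linarith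
        have "Pres (d - j - 1) n D \<pi>" using pres_step[OF a1 a2 p D pj] .
        moreover have "d - j - 1 = d - Suc j" by simp
        ultimately show "Pres (d - Suc j) n D \<pi>" by simp
      qed
    qed
  qed
  then have "Pres (d - (d - 1)) n D \<pi>" by blast
  moreover have "d - (d - 1) = 1" using d by simp
  ultimately show ?thesis by simp
qed

theorem theorem3p10:
  fixes d n :: nat and D :: "nat set \<Rightarrow> complex" and \<pi> :: "nat set \<Rightarrow> nat set"
  assumes "d \<ge> 1" and "n \<ge> d + 2"
    and "\<forall>e\<in>edges n. D e \<noteq> 0"
    and "\<pi> permutes edges n"
    and "lin_aut d n (matmul n (diag_mat D) (perm_mat \<pi>))"
  shows "(\<exists>\<sigma>. \<sigma> permutes {..<n} \<and> (\<forall>i j. i < j \<and> j < n \<longrightarrow> \<pi> {i, j} = {\<sigma> i, \<sigma> j}))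
         \<and> (\<exists>c. \<forall>e\<in>edges n. D e = c)"
proof -
  note d = assms(1) and nd = assms(2) and D = assms(3) and p = assms(4) and la = assms(5)
  have n3: "n \<ge> 3" using d nd by simp
  have pres1: "Pres 1 n D \<pi>" using pres_one[OF d nd D p pres_top[OF p la]] .
  define E where "E = (\<lambda>u. \<pi> ` star n u)"
  have inE: "e \<in> E u \<longleftrightarrow> inv \<pi> e \<in> star n u" for e u
  proof
    assume "e \<in> E u"
    then obtain f where "f \<in> star n u" "e = \<pi> f" by (auto simp: E_def)
    moreover have "inv \<pi> (\<pi> f) = f" using permutes_inverses[OF p] by metis
    ultimately show "inv \<pi> e \<in> star n u" by simp
  next
    assume "inv \<pi> e \<in> star n u"
    moreover have "\<pi> (inv \<pi> e) = e" using permutes_inverses[OF p] by metis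
    ultimately show "e \<in> E u" unfolding E_def by (metis imageI)
  qed
  have Esub: "E u \<subseteq> edges n" for u
  proof -
    have "star n u \<subseteq> edges n" by (auto simp: star_def)
    then have "\<pi> ` star n u \<subseteq> \<pi> ` edges n" by blast
    then show ?thesis using permutes_image[OF p] by (simp add: E_def)
  qed
  have cardE: "u < n \<Longrightarrow> card (E u) = n - 1" for u
  proof -
    assume u: "u < n"
    have "inj_on \<pi> (star n u)" using permutes_inj[OF p] by (simp add: inj_on_def inj_def)
    then show ?thesis using card_star[OF u] by (simp add: E_def card_image)
  qed
  have starE: "\<exists>v<n. E u = star n v \<and> (\<forall>e\<in>E u. \<forall>e'\<in>E u. D e = D e')" if u: "u < n" for u
  proof -
    have sv: "mvec 1 n (dl u) \<in> vecs n" by (rule mvec_vecs)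
    have "mvec 1 n (dl u) \<in> Mdn 1 n" by (simp add: Mdn_def)
    then have "DPmap n D \<pi> (mvec 1 n (dl u)) \<in> Mdn 1 n" using pres1 sv by (simp add: Pres_def)
    then obtain q where q: "DPmap n D \<pi> (mvec 1 n (dl u)) = mvec 1 n q" by (auto simp: Mdn_def)
    define a where "a = (\<lambda>i. q i 0)"
    have H: "(a i - a j)^2 = (if {i, j} \<in> E u then D {i, j} else 0)"
      if ij: "i < n" "j < n" "i \<noteq> j" for i j
    proof -
      have e: "{i,j} \<in> edges n" using ij by (simp add: edges_iff)
      have ie: "inv \<pi> {i,j} \<in> edges n" using e permutes_inv[OF p] by (simp add: permutes_in_image)
      have "(a i - a j)^2 = mvec 1 n q {i,j}" using ij by (simp add: mvec_pair sqd_def a_def)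
      also have "\<dots> = D {i,j} * mvec 1 n (dl u) (inv \<pi> {i,j})"
        using q[symmetric] e by (simp add: DPmap_def fun_eq_iff)
      also have "\<dots> = (if {i, j} \<in> E u then D {i, j} else 0)"
        unfolding dl_val[OF ie, of u] using ie by (simp add: inE star_def)
      finally show ?thesis .
    qed
    obtain v where v: "v < n" "E u = {e \<in> edges n. v \<in> e}" "\<forall>e\<in>E u. \<forall>e'\<in>E u. D e = D e'"
      using star_lemma[OF n3 Esub cardE[OF u] D H] by blast
    have "E u = star n v" using v(2) unfolding star_def .
    then show ?thesis using v(1) v(3) by blast
  qed
  have "\<forall>u. \<exists>v. u < n \<longrightarrow> v < n \<and> E u = star n v \<and> (\<forall>e\<in>E u. \<forall>e'\<in>E u. D e = D e')"
  proof
    fix u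
    show "\<exists>v. u < n \<longrightarrow> v < n \<and> E u = star n v \<and> (\<forall>e\<in>E u. \<forall>e'\<in>E u. D e = D e')"
    proof (cases "u < n")
      case True
      then obtain v where "v < n \<and> E u = star n v \<and> (\<forall>e\<in>E u. \<forall>e'\<in>E u. D e = D e')"
        using starE by blast
      then show ?thesis by blast
    next
      case False
      then show ?thesis by simp
    qed
  qed
  from choice[OF this] obtain \<sigma>0 where s00:
    "\<forall>u. u < n \<longrightarrow> \<sigma>0 u < n \<and> E u = star n (\<sigma>0 u) \<and> (\<forall>e\<in>E u. \<forall>e'\<in>E u. D e = D e')"
    by (elim exE)
  have s0: "\<And>u. u < n \<Longrightarrow> \<sigma>0 u < n \<and> E u = star n (\<sigma>0 u) \<and> (\<forall>e\<in>E u. \<forall>e'\<in>E u. D e = D e')"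
    by (rule s00[rule_format])
  have s0a: "\<And>u. u < n \<Longrightarrow> \<sigma>0 u < n" by (rule s0[THEN conjunct1])
  have s0b: "\<And>u. u < n \<Longrightarrow> E u = star n (\<sigma>0 u)" by (rule s0[THEN conjunct2, THEN conjunct1])
  have s0c: "\<And>u. u < n \<Longrightarrow> \<forall>e\<in>E u. \<forall>e'\<in>E u. D e = D e'" by (rule s0[THEN conjunct2, THEN conjunct2])
  have Einj: "E u = E w \<Longrightarrow> u < n \<Longrightarrow> w < n \<Longrightarrow> u = w" for u w
  proof -
    assume h: "E u = E w" "u < n" "w < n"
    have "star n u = star n w"
    proof
      show "star n u \<subseteq> star n w"
      proof
        fix f assume f: "f \<in> star n u"
        have "inv \<pi> (\<pi> f) = f" using permutes_inverses[OF p] by metis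
        then have "\<pi> f \<in> E u" using f inE[of "\<pi> f" u] by simp
        then have "\<pi> f \<in> E w" using h by simp
        then show "f \<in> star n w" using inE[of "\<pi> f" w] \<open>inv \<pi> (\<pi> f) = f\<close> by simp
      qed
      show "star n w \<subseteq> star n u"
      proof
        fix f assume f: "f \<in> star n w"
        have "inv \<pi> (\<pi> f) = f" using permutes_inverses[OF p] by metis
        then have "\<pi> f \<in> E w" using f inE[of "\<pi> f" w] by simp
        then have "\<pi> f \<in> E u" using h by simp
        then show "f \<in> star n u" using inE[of "\<pi> f" u] \<open>inv \<pi> (\<pi> f) = f\<close> by simp
      qed
    qed
    then show "u = w" using star_inj[OF n3 h(2) h(3)] by blast
  qed
  have s0inj: "inj_on \<sigma>0 {..<n}"
  proof (rule inj_onI)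
    fix u w assume u: "u \<in> {..<n}" and w: "w \<in> {..<n}" and eq: "\<sigma>0 u = \<sigma>0 w"
    have uu: "u < n" and ww: "w < n" using u w by auto
    have "E u = star n (\<sigma>0 u)" using s0b[OF uu] .
    also have "\<dots> = star n (\<sigma>0 w)" using eq by simp
    also have "\<dots> = E w" using s0b[OF ww] by simp
    finally have "E u = E w" .
    then show "u = w" using Einj u w by simp
  qed
  have s0sub: "\<sigma>0 ` {..<n} \<subseteq> {..<n}"
  proof (rule image_subsetI)
    fix x assume "x \<in> {..<n}"
    then show "\<sigma>0 x \<in> {..<n}" using s0a[of x] by simp
  qed
  have s0img: "\<sigma>0 ` {..<n} = {..<n}" using endo_inj_surj[OF finite_lessThan s0sub s0inj] .
  define \<sigma> where "\<sigma> = (\<lambda>i. if i < n then \<sigma>0 i else i)"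
  have sig_perm: "\<sigma> permutes {..<n}"
  proof (rule bij_imp_permutes)
    have "bij_betw \<sigma>0 {..<n} {..<n}" using s0inj s0img by (simp add: bij_betw_def)
    moreover have "\<And>x. x \<in> {..<n} \<Longrightarrow> \<sigma> x = \<sigma>0 x" by (simp add: \<sigma>_def)
    ultimately show "bij_betw \<sigma> {..<n} {..<n}" using bij_betw_cong by blast
    show "\<And>x. x \<notin> {..<n} \<Longrightarrow> \<sigma> x = x" by (simp add: \<sigma>_def)
  qed
  have piE: "\<pi> {i, j} \<in> E i" if "i < n" "j < n" "i \<noteq> j" for i j
  proof -
    have "{i,j} \<in> star n i" using that by (simp add: star_def edges_iff)
    then show ?thesis by (simp add: E_def)
  qed
  have part1: "\<forall>i j. i < j \<and> j < n \<longrightarrow> \<pi> {i, j} = {\<sigma> i, \<sigma> j}"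
  proof (intro allI impI)
    fix i j assume ij: "i < j \<and> j < n"
    have i: "i < n" and j: "j < n" and ne: "i \<noteq> j" using ij by auto
    have "\<pi> {i,j} \<in> star n (\<sigma>0 i)" using piE[OF i j ne] s0b[OF i] by simp
    moreover have "\<pi> {j,i} \<in> star n (\<sigma>0 j)" using piE[OF j i] ne s0b[OF j] by simp
    ultimately have m: "\<pi> {i,j} \<in> edges n" "\<sigma>0 i \<in> \<pi> {i,j}" "\<sigma>0 j \<in> \<pi> {i,j}"
      by (auto simp: star_def insert_commute)
    have sne: "\<sigma>0 i \<noteq> \<sigma>0 j" using s0inj i j ne by (meson inj_onD lessThan_iff)
    obtain y where y: "\<pi> {i,j} = {\<sigma>0 i, y}" using star_mem[OF m(1) m(2)] by blast
    then have "y = \<sigma>0 j" using m(3) sne by auto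
    then show "\<pi> {i, j} = {\<sigma> i, \<sigma> j}" using y i j by (simp add: \<sigma>_def)
  qed
  have Dstar: "\<forall>e\<in>star n v. \<forall>e'\<in>star n v. D e = D e'" if v: "v < n" for v
  proof -
    have "v \<in> \<sigma>0 ` {..<n}" using v s0img by simp
    then obtain u where u: "u < n" "\<sigma>0 u = v" by auto
    have Euv: "E u = star n v" using s0b[OF u(1)] u(2) by simp
    have "\<forall>e\<in>E u. \<forall>e'\<in>E u. D e = D e'" by (rule s0c[OF u(1)])
    then show ?thesis unfolding Euv .
  qed
  have part2: "\<forall>e\<in>edges n. D e = D {0, 1}"
  proof
    fix e assume e: "e \<in> edges n"
    have e01: "{0, 1} \<in> edges n" using n3 by (simp add: edges_iff)
    obtain x where x: "x \<in> e" using e by (auto simp: edges_def)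
    have xn: "x < n" using e x by (auto simp: edges_def)
    show "D e = D {0, 1}"
    proof (cases "x \<in> {0, 1}")
      case True
      then have "e \<in> star n x" "{0,1} \<in> star n x" using e x e01 by (auto simp: star_def)
      then show ?thesis using Dstar[OF xn] by blast
    next
      case False
      then have x0: "x \<noteq> 0" by simp
      have "{x, 0} \<in> edges n" using xn x0 n3 by (simp add: edges_iff)
      then have "e \<in> star n x" "{x,0} \<in> star n x" "{x,0} \<in> star n 0" "{0,1} \<in> star n 0"
        using e x e01 by (auto simp: star_def)
      have n0: "0 < n" using n3 by simp
      have "D e = D {x, 0}" using Dstar[OF xn] \<open>e \<in> star n x\<close> \<open>{x,0} \<in> star n x\<close> by blast
      also have "\<dots> = D {0, 1}" using Dstar[OF n0] \<open>{x,0} \<in> star n 0\<close> \<open>{0,1} \<in> star n 0\<close> by blast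
      finally show ?thesis .
    qed
  qed
  show ?thesis using sig_perm part1 part2 by blast
qed

end
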